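(* Let $n\ge 1$ and let $O:\{0,1\}^n\to\{-,0,+\}^n$ be a partial orientation of the $n$-cube that is partially Szabó–Welzl. Then $O$ can be extended to a unique sink orientation, i.e., there exists a unique sink orientation $O':\{0,1\}^n\to\{-,+\}^n$ with $O'(v)_i=O(v)_i$ for all $v\in\{0,1\}^n$ and $i\in[n]$ with $O(v)_i\neq 0$.
   Context: The $n$-cube $Q_n$ has vertex set $\{0,1\}^n$, two vertices being adjacent iff they differ in exactly one coordinate. A face of $Q_n$ is a set of the form $\{w\in\{0,1\}^n : w_j=u_j \text{ for all } j\notin I\}$ for some $u\in\{0,1\}^n$ and $I\subseteq[n]$; it spans the dimensions in $I$. A partial orientation is a function $O:\{0,1\}^n\to\{-,0,+\}^n$, where $O(v)_i=+$ means the half-edge of $v$ in dimension $i$ is outgoing, $O(v)_i=-$ incoming, and $O(v)_i=0$ unoriented (degenerate). An orientation is a partial orientation with no zero entries. A unique sink orientation (USO) is an orientation such that every non-empty face $f$ contains exactly one vertex $v$ with $O(v)_i=-$ for all dimensions $i$ spanned by $f$. A partial orientation $O$ is partially Szabó–Welzl if for any two distinct vertices $v,w$, either (1) $O(v)_i=O(w)_i=0$ for all $i$ with $v_i\neq w_i$, or (2) there exists $i$ with $v_i\neq w_i$ and $\{O(v)_i,O(w)_i\}=\{-,+\}$. *)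

theory Defs
  imports Main
begin

text \<open>Signs of half-edges: Minus = incoming, Zero = unoriented, Plus = outgoing.\<close>
datatype sign = Minus | Zero | Plus

text \<open>Vertices of the n-cube: bit vectors \<open>nat \<Rightarrow> bool\<close>, coordinates 0..n-1
  (coordinate i+1 of the paper), all coordinates \<open>\<ge> n\<close> fixed to False.\<close>
definition cube :: "nat \<Rightarrow> (nat \<Rightarrow> bool) set" where
  "cube n = {v. \<forall>i. n \<le> i \<longrightarrow> \<not> v i}"

definition face :: "nat \<Rightarrow> (nat \<Rightarrow> bool) \<Rightarrow> nat set \<Rightarrow> (nat \<Rightarrow> bool) set" where
  "face n u I = {w \<in> cube n. \<forall>j<n. j \<notin> I \<longrightarrow> w j = u j}"

text \<open>A partial orientation Or assigns Or v i to vertex v and dimension i < n;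
  values outside the cube / for i \<ge> n are irrelevant.\<close>
definition is_orientation :: "nat \<Rightarrow> ((nat \<Rightarrow> bool) \<Rightarrow> nat \<Rightarrow> sign) \<Rightarrow> bool" where
  "is_orientation n Or \<longleftrightarrow> (\<forall>v\<in>cube n. \<forall>i<n. Or v i \<noteq> Zero)"

definition is_USO :: "nat \<Rightarrow> ((nat \<Rightarrow> bool) \<Rightarrow> nat \<Rightarrow> sign) \<Rightarrow> bool" where
  "is_USO n Or \<longleftrightarrow> is_orientation n Or \<and>
     (\<forall>u\<in>cube n. \<forall>I\<subseteq>{..<n}.
        (\<exists>!v. v \<in> face n u I \<and> (\<forall>i\<in>I. Or v i = Minus)))"

definition partially_SW :: "nat \<Rightarrow> ((nat \<Rightarrow> bool) \<Rightarrow> nat \<Rightarrow> sign) \<Rightarrow> bool" where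
  "partially_SW n Or \<longleftrightarrow> (\<forall>v\<in>cube n. \<forall>w\<in>cube n. v \<noteq> w \<longrightarrow>
     ((\<forall>i<n. v i \<noteq> w i \<longrightarrow> Or v i = Zero \<and> Or w i = Zero) \<or>
      (\<exists>i<n. v i \<noteq> w i \<and> {Or v i, Or w i} = {Minus, Plus})))"

end

theory Submission
  imports Defs
begin

definition ext :: "((nat \<Rightarrow> bool) \<Rightarrow> nat \<Rightarrow> sign) \<Rightarrow> (nat \<Rightarrow> bool) \<Rightarrow> nat \<Rightarrow> sign" where
  "ext Or = (\<lambda>v i. if Or v i = Zero then (if v i then Minus else Plus) else Or v i)"

lemma ext_SW:
  assumes "partially_SW n Or" "v \<in> cube n" "w \<in> cube n" "v \<noteq> w"
  shows "\<exists>i<n. v i \<noteq> w i \<and> {ext Or v i, ext Or w i} = {Minus, Plus}"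
proof -
  from assms have
    "(\<forall>i<n. v i \<noteq> w i \<longrightarrow> Or v i = Zero \<and> Or w i = Zero) \<or>
      (\<exists>i<n. v i \<noteq> w i \<and> {Or v i, Or w i} = {Minus, Plus})"
    unfolding partially_SW_def by blast
  then show ?thesis
  proof
    assume h: "\<forall>i<n. v i \<noteq> w i \<longrightarrow> Or v i = Zero \<and> Or w i = Zero"
    obtain i where i: "v i \<noteq> w i" using assms(4) by blast
    have "i < n" using i assms(2,3) unfolding cube_def by (cases "i < n") auto
    with h i show ?thesis unfolding ext_def by (intro exI[of _ i]) auto
  next
    assume "\<exists>i<n. v i \<noteq> w i \<and> {Or v i, Or w i} = {Minus, Plus}"
    then obtain i where "i<n" "v i \<noteq> w i" "{Or v i, Or w i} = {Minus, Plus}" by blast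
    moreover have "Or v i \<noteq> Zero" "Or w i \<noteq> Zero" using calculation(3)
      by (auto simp: doubleton_eq_iff)
    ultimately show ?thesis unfolding ext_def by auto
  qed
qed

lemma SW_USO:
  fixes O' :: "(nat \<Rightarrow> bool) \<Rightarrow> nat \<Rightarrow> sign"
  assumes orient: "\<forall>v\<in>cube n. \<forall>i<n. O' v i \<noteq> Zero"
    and sw: "\<And>v w. v \<in> cube n \<Longrightarrow> w \<in> cube n \<Longrightarrow> v \<noteq> w \<Longrightarrow>
              \<exists>i<n. v i \<noteq> w i \<and> {O' v i, O' w i} = {Minus, Plus}"
  shows "is_USO n O'"
  unfolding is_USO_def is_orientation_def
proof (intro conjI ballI allI impI orient[rule_format])
  fix u I assume u: "u \<in> cube n" and I: "I \<subseteq> {..<n}"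
  define \<psi> where "\<psi> S = (\<lambda>j. if j \<in> I then j \<in> S else u j)" for S
  define \<phi> where "\<phi> v = {i\<in>I. O' v i = Plus}" for v
  have psi_face: "\<psi> S \<in> face n u I" for S
    using u I unfolding face_def cube_def \<psi>_def by auto
  have psi_inj: "inj_on \<psi> (Pow I)"
  proof (rule inj_onI)
    fix S T assume "S \<in> Pow I" "T \<in> Pow I" "\<psi> S = \<psi> T"
    moreover have "S = {j\<in>I. \<psi> S j}" "T = {j\<in>I. \<psi> T j}"
      using \<open>S \<in> Pow I\<close> \<open>T \<in> Pow I\<close> unfolding \<psi>_def by auto
    ultimately show "S = T" by simp
  qed
  have face_diff: "v i = w i" if "v \<in> face n u I" "w \<in> face n u I" "i \<notin> I" for v w i
  proof (cases "i < n")
    case True then show ?thesis using that unfolding face_def by auto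
  next
    case False then show ?thesis using that unfolding face_def cube_def by auto
  qed
  have phi_inj: "inj_on \<phi> (face n u I)"
  proof (rule inj_onI, rule ccontr)
    fix v w assume v: "v \<in> face n u I" and w: "w \<in> face n u I" and e: "\<phi> v = \<phi> w" and ne: "v \<noteq> w"
    have "v \<in> cube n" "w \<in> cube n" using v w unfolding face_def by auto
    from sw[OF this ne] obtain i where i: "i<n" "v i \<noteq> w i" "{O' v i, O' w i} = {Minus, Plus}" by blast
    have "i \<in> I" using face_diff[OF v w] i by blast
    from i(3) have "(O' v i = Plus \<and> O' w i \<noteq> Plus) \<or> (O' w i = Plus \<and> O' v i \<noteq> Plus)"
      by (auto simp: doubleton_eq_iff)
    then show False using e \<open>i \<in> I\<close> unfolding \<phi>_def by blast
  qed
  have fin: "finite (Pow I)" using I finite_subset by blast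
  have inj2: "inj_on (\<phi> \<circ> \<psi>) (Pow I)"
    using psi_inj phi_inj psi_face by (meson comp_inj_on image_subsetI inj_on_subset)
  have sub: "(\<phi> \<circ> \<psi>) ` Pow I \<subseteq> Pow I" unfolding \<phi>_def by auto
  have "(\<phi> \<circ> \<psi>) ` Pow I = Pow I" using endo_inj_surj[OF fin sub inj2] .
  then obtain S where "S \<in> Pow I" "\<phi> (\<psi> S) = {}" by (metis Pow_bottom comp_apply imageE)
  then have sink: "\<forall>i\<in>I. O' (\<psi> S) i = Minus"
  proof -
    have "\<psi> S \<in> cube n" using psi_face[of S] unfolding face_def by auto
    show ?thesis
    proof
      fix i assume i: "i \<in> I"
      then have "i < n" using I by auto
      then have "O' (\<psi> S) i \<noteq> Zero" using orient \<open>\<psi> S \<in> cube n\<close> by blast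
      moreover have "O' (\<psi> S) i \<noteq> Plus" using \<open>\<phi> (\<psi> S) = {}\<close> i unfolding \<phi>_def by blast
      ultimately show "O' (\<psi> S) i = Minus" by (cases "O' (\<psi> S) i") auto
    qed
  qed
  show "\<exists>!v. v \<in> face n u I \<and> (\<forall>i\<in>I. O' v i = Minus)"
  proof (rule ex1I[of _ "\<psi> S"])
    show "\<psi> S \<in> face n u I \<and> (\<forall>i\<in>I. O' (\<psi> S) i = Minus)" using psi_face sink by blast
  next
    fix v assume v: "v \<in> face n u I \<and> (\<forall>i\<in>I. O' v i = Minus)"
    show "v = \<psi> S"
    proof (rule ccontr)
      assume ne: "v \<noteq> \<psi> S"
      have "v \<in> cube n" "\<psi> S \<in> cube n" using v psi_face[of S] unfolding face_def by auto
      from sw[OF this ne] obtain i where i: "i<n" "v i \<noteq> \<psi> S i" "{O' v i, O' (\<psi> S) i} = {Minus, Plus}" by blast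
      have "i \<in> I" using face_diff[OF _ psi_face] v i by blast
      then show False using v sink i(3) by (auto simp: doubleton_eq_iff)
    qed
  qed
qed

theorem mainTheorem1:
  fixes n :: nat and Or :: "(nat \<Rightarrow> bool) \<Rightarrow> nat \<Rightarrow> sign"
  assumes "n \<ge> 1" and "partially_SW n Or"
  shows "\<exists>O'. is_USO n O' \<and>
           (\<forall>v\<in>cube n. \<forall>i<n. Or v i \<noteq> Zero \<longrightarrow> O' v i = Or v i)"
proof (intro exI conjI)
  show "is_USO n (ext Or)"
  proof (rule SW_USO)
    show "\<forall>v\<in>cube n. \<forall>i<n. ext Or v i \<noteq> Zero" by (auto simp: ext_def)
  qed (rule ext_SW[OF assms(2)])
  show "\<forall>v\<in>cube n. \<forall>i<n. Or v i \<noteq> Zero \<longrightarrow> ext Or v i = Or v i"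
    by (auto simp: ext_def)
qed

end
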